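(* Let $Q$ be a finite connected quandle. Then $Q$ is isomorphic to $\mathrm{GAlex}(G,f)$ for some group $G$ and $f\in\mathrm{Aut}(G)$ if and only if one of the following holds: (i) $|Q|=|\mathrm{Inn}(Q)'|$; (ii) $\mathrm{Stab}_{\mathrm{Inn}(Q)'}(e)=\{1\}$ for every $e\in Q$. If either (i) or (ii) holds then both hold. Furthermore, in this case one may take $G=\mathrm{Inn}(Q)'$ and, for any $e\in Q$, $f(g)=R_e^{-1}gR_e$ for $g\in G$.
   Context: A quandle is a set with operation $*$ satisfying $a*a=a$; unique right division; $(a*b)*c=(a*c)*(b*c)$. $R_a(y)=y*a$; $\mathrm{Inn}(Q)$ is the group generated by the $R_a$, and $Q$ is connected if it acts transitively. $\mathrm{Inn}(Q)'$ is its derived (commutator) subgroup, which is normal in $\mathrm{Inn}(Q)$, so $g\mapsto R_e^{-1}gR_e$ is an automorphism of it; $\mathrm{Stab}$ denotes the stabilizer under the natural action on $Q$. $\mathrm{GAlex}(G,f)$ is the quandle on a group $G$ with $a*b=f(ab^{-1})b$. *)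

theory Defs
  imports "HOL-Algebra.Algebra"
begin

definition quandle :: "'a set \<Rightarrow> ('a \<Rightarrow> 'a \<Rightarrow> 'a) \<Rightarrow> bool" where
  "quandle Q op \<longleftrightarrow>
     (\<forall>a\<in>Q. \<forall>b\<in>Q. op a b \<in> Q) \<and>
     (\<forall>a\<in>Q. op a a = a) \<and>
     (\<forall>a\<in>Q. \<forall>b\<in>Q. \<exists>!x. x \<in> Q \<and> op x a = b) \<and>
     (\<forall>a\<in>Q. \<forall>b\<in>Q. \<forall>c\<in>Q. op (op a b) c = op (op a c) (op b c))"

definition Rt :: "'a set \<Rightarrow> ('a \<Rightarrow> 'a \<Rightarrow> 'a) \<Rightarrow> 'a \<Rightarrow> ('a \<Rightarrow> 'a)" where
  "Rt Q op a = (\<lambda>y\<in>Q. op y a)"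

text \<open>The permutation group of Q, with products read left to right
  (right-action convention: g h means first g, then h).\<close>
definition RBij :: "'a set \<Rightarrow> ('a \<Rightarrow> 'a) monoid" where
  "RBij Q = \<lparr>carrier = Bij Q,
             monoid.mult = \<lambda>g\<in>Bij Q. \<lambda>h\<in>Bij Q. compose Q h g,
             one = \<lambda>x\<in>Q. x\<rparr>"

definition Inn :: "'a set \<Rightarrow> ('a \<Rightarrow> 'a \<Rightarrow> 'a) \<Rightarrow> ('a \<Rightarrow> 'a) set" where
  "Inn Q op = generate (RBij Q) (Rt Q op ` Q)"

definition InnGroup :: "'a set \<Rightarrow> ('a \<Rightarrow> 'a \<Rightarrow> 'a) \<Rightarrow> ('a \<Rightarrow> 'a) monoid" where
  "InnGroup Q op = (RBij Q)\<lparr>carrier := Inn Q op\<rparr>"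

definition InnD :: "'a set \<Rightarrow> ('a \<Rightarrow> 'a \<Rightarrow> 'a) \<Rightarrow> ('a \<Rightarrow> 'a) set" where
  "InnD Q op = derived (InnGroup Q op) (Inn Q op)"

definition InnDGroup :: "'a set \<Rightarrow> ('a \<Rightarrow> 'a \<Rightarrow> 'a) \<Rightarrow> ('a \<Rightarrow> 'a) monoid" where
  "InnDGroup Q op = (RBij Q)\<lparr>carrier := InnD Q op\<rparr>"

definition connected_quandle :: "'a set \<Rightarrow> ('a \<Rightarrow> 'a \<Rightarrow> 'a) \<Rightarrow> bool" where
  "connected_quandle Q op \<longleftrightarrow> quandle Q op \<and>
     (\<forall>x\<in>Q. \<forall>y\<in>Q. \<exists>g\<in>Inn Q op. g x = y)"

definition Stab :: "('a \<Rightarrow> 'a) set \<Rightarrow> 'a \<Rightarrow> ('a \<Rightarrow> 'a) set" where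
  "Stab H e = {g \<in> H. g e = e}"

definition conjR :: "'a set \<Rightarrow> ('a \<Rightarrow> 'a \<Rightarrow> 'a) \<Rightarrow> 'a \<Rightarrow> ('a \<Rightarrow> 'a) \<Rightarrow> ('a \<Rightarrow> 'a)" where
  "conjR Q op e = (\<lambda>g\<in>InnD Q op.
      inv\<^bsub>InnGroup Q op\<^esub> (Rt Q op e) \<otimes>\<^bsub>InnGroup Q op\<^esub> g \<otimes>\<^bsub>InnGroup Q op\<^esub> Rt Q op e)"

definition galex :: "('b, 'c) monoid_scheme \<Rightarrow> ('b \<Rightarrow> 'b) \<Rightarrow> 'b \<Rightarrow> 'b \<Rightarrow> 'b" where
  "galex G f a b = f (a \<otimes>\<^bsub>G\<^esub> inv\<^bsub>G\<^esub> b) \<otimes>\<^bsub>G\<^esub> b"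

definition quandle_iso :: "'a set \<Rightarrow> ('a \<Rightarrow> 'a \<Rightarrow> 'a) \<Rightarrow> 'b set \<Rightarrow> ('b \<Rightarrow> 'b \<Rightarrow> 'b) \<Rightarrow> bool" where
  "quandle_iso Q op Q' op' \<longleftrightarrow> (\<exists>\<phi>. bij_betw \<phi> Q Q' \<and>
     (\<forall>x\<in>Q. \<forall>y\<in>Q. \<phi> (op x y) = op' (\<phi> x) (\<phi> y)))"

end

theory Submission imports Defs "HOL-Combinatorics.Cycles" begin

lemma RBij_group: "group (RBij Q)"
  apply (simp add: RBij_def)
  apply (rule groupI)
      apply (auto simp: compose_Bij id_Bij Bij_imp_funcset Bij_imp_extensional compose_assoc)
     apply (rule compose_Id, erule Bij_imp_funcset, erule Bij_imp_extensional)
  subgoal for x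
    apply (rule bexI[where x="\<lambda>y\<in>Q. inv_into Q x y"])
     apply (auto simp: restrict_inv_into_Bij)
     apply (rule compose_id_inv_into)
    apply (auto simp: Bij_def bij_betw_def)
    done
  done

lemma RBij_carrier[simp]: "carrier (RBij Q) = Bij Q"
  by (simp add: RBij_def)

lemma RBij_one[simp]: "\<one>\<^bsub>RBij Q\<^esub> = (\<lambda>x\<in>Q. x)"
  by (simp add: RBij_def)

lemma RBij_mult_app: "g \<in> Bij Q \<Longrightarrow> h \<in> Bij Q \<Longrightarrow> x \<in> Q \<Longrightarrow> (g \<otimes>\<^bsub>RBij Q\<^esub> h) x = h (g x)"
  by (simp add: RBij_def compose_def)

lemma Bij_app: "g \<in> Bij Q \<Longrightarrow> x \<in> Q \<Longrightarrow> g x \<in> Q"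
  by (auto simp: Bij_def bij_betw_def)

lemma Bij_eqI: "g \<in> Bij Q \<Longrightarrow> h \<in> Bij Q \<Longrightarrow> (\<And>x. x \<in> Q \<Longrightarrow> g x = h x) \<Longrightarrow> g = h"
  by (rule extensionalityI[of g Q h]) (auto simp: Bij_def)

lemma RBij_inv_Bij: "g \<in> Bij Q \<Longrightarrow> inv\<^bsub>RBij Q\<^esub> g \<in> Bij Q"
  using group.inv_closed[OF RBij_group, of g Q] by simp

lemma RBij_inv_app1: "g \<in> Bij Q \<Longrightarrow> x \<in> Q \<Longrightarrow> g ((inv\<^bsub>RBij Q\<^esub> g) x) = x"
proof -
  assume g: "g \<in> Bij Q" and x: "x \<in> Q"
  have "inv\<^bsub>RBij Q\<^esub> g \<otimes>\<^bsub>RBij Q\<^esub> g = \<one>\<^bsub>RBij Q\<^esub>"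
    using group.l_inv[OF RBij_group, of g Q] g by simp
  hence "(inv\<^bsub>RBij Q\<^esub> g \<otimes>\<^bsub>RBij Q\<^esub> g) x = x" using x by simp
  thus ?thesis using RBij_mult_app[OF RBij_inv_Bij[OF g] g x] by simp
qed

lemma RBij_inv_app2: "g \<in> Bij Q \<Longrightarrow> x \<in> Q \<Longrightarrow> (inv\<^bsub>RBij Q\<^esub> g) (g x) = x"
proof -
  assume g: "g \<in> Bij Q" and x: "x \<in> Q"
  have "g \<otimes>\<^bsub>RBij Q\<^esub> inv\<^bsub>RBij Q\<^esub> g = \<one>\<^bsub>RBij Q\<^esub>"
    using group.r_inv[OF RBij_group, of g Q] g by simp
  hence "(g \<otimes>\<^bsub>RBij Q\<^esub> inv\<^bsub>RBij Q\<^esub> g) x = x" using x by simp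
  thus ?thesis using RBij_mult_app[OF g RBij_inv_Bij[OF g] x] by simp
qed

locale qd =
  fixes Q :: "'a set" and op :: "'a \<Rightarrow> 'a \<Rightarrow> 'a"
  assumes qd: "quandle Q op"
begin

lemma op_closed: "a \<in> Q \<Longrightarrow> b \<in> Q \<Longrightarrow> op a b \<in> Q"
  using qd unfolding quandle_def by blast
lemma idem: "a \<in> Q \<Longrightarrow> op a a = a"
  using qd unfolding quandle_def by blast
lemma rdiv: "a \<in> Q \<Longrightarrow> b \<in> Q \<Longrightarrow> \<exists>!x. x \<in> Q \<and> op x a = b"
  using qd unfolding quandle_def by blast
lemma sd: "a \<in> Q \<Longrightarrow> b \<in> Q \<Longrightarrow> c \<in> Q \<Longrightarrow> op (op a b) c = op (op a c) (op b c)"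
  using qd unfolding quandle_def by blast

lemma Rt_app: "y \<in> Q \<Longrightarrow> Rt Q op a y = op y a"
  by (simp add: Rt_def)

lemma rdiv_uniq:
  assumes a: "a \<in> Q" and x: "x \<in> Q" and y: "y \<in> Q" and e: "op x a = op y a"
  shows "x = y"
proof -
  have u: "\<exists>!z. z \<in> Q \<and> op z a = op x a" using rdiv[OF a op_closed[OF x a]] .
  then obtain z where hz: "\<forall>w. w \<in> Q \<and> op w a = op x a \<longrightarrow> w = z" by (auto simp: Ex1_def)
  have "x = z" using hz x by simp
  moreover have "y = z" using hz y e by simp
  ultimately show ?thesis by simp
qed

lemma rdiv_ex:
  assumes a: "a \<in> Q" and b: "b \<in> Q"
  obtains x where "x \<in> Q" "op x a = b"
  using ex1_implies_ex[OF rdiv[OF a b]] by blast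

lemma Rt_Bij: "a \<in> Q \<Longrightarrow> Rt Q op a \<in> Bij Q"
proof -
  assume a: "a \<in> Q"
  have "inj_on (Rt Q op a) Q"
  proof (rule inj_onI)
    fix x y assume x: "x \<in> Q" and y: "y \<in> Q" and e: "Rt Q op a x = Rt Q op a y"
    have e': "op x a = op y a" using e x y by (simp add: Rt_app)
    show "x = y" by (rule rdiv_uniq[OF a x y e'])
  qed
  moreover have "Rt Q op a ` Q = Q"
  proof
    show "Rt Q op a ` Q \<subseteq> Q"
    proof
      fix z assume "z \<in> Rt Q op a ` Q"
      then obtain x where x: "x \<in> Q" "z = Rt Q op a x" by blast
      thus "z \<in> Q" using op_closed[OF x(1) a] by (simp add: Rt_app)
    qed
    show "Q \<subseteq> Rt Q op a ` Q"
    proof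
      fix b assume b: "b \<in> Q"
      obtain x where x: "x \<in> Q" "op x a = b" using rdiv_ex[OF a b] .
      have "Rt Q op a x = b" using x by (simp add: Rt_app)
      thus "b \<in> Rt Q op a ` Q" using x(1) by blast
    qed
  qed
  ultimately have "bij_betw (Rt Q op a) Q Q" by (simp add: bij_betw_def)
  moreover have "Rt Q op a \<in> extensional Q" by (simp add: Rt_def)
  ultimately show ?thesis by (simp add: Bij_def)
qed

lemma Rt_sub: "Rt Q op ` Q \<subseteq> carrier (RBij Q)"
  using Rt_Bij by auto

lemma Inn_sub: "subgroup (Inn Q op) (RBij Q)"
  unfolding Inn_def by (rule group.generate_is_subgroup[OF RBij_group Rt_sub])

lemma Inn_Bij: "g \<in> Inn Q op \<Longrightarrow> g \<in> Bij Q"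
  using subgroup.subset[OF Inn_sub] by auto

lemma Rt_Inn: "a \<in> Q \<Longrightarrow> Rt Q op a \<in> Inn Q op"
  unfolding Inn_def by (rule generate.incl) auto

lemma InnGroup_eq: "InnGroup Q op = (RBij Q)\<lparr>carrier := Inn Q op\<rparr>"
  by (simp add: InnGroup_def)

lemma InnGroup_group: "group (InnGroup Q op)"
  unfolding InnGroup_eq by (rule subgroup.subgroup_is_group[OF Inn_sub RBij_group])

lemma InnGroup_inv: "g \<in> Inn Q op \<Longrightarrow> inv\<^bsub>InnGroup Q op\<^esub> g = inv\<^bsub>RBij Q\<^esub> g"
  unfolding InnGroup_eq by (rule group.m_inv_consistent[OF RBij_group Inn_sub])

lemma InnGroup_mult[simp]: "g \<otimes>\<^bsub>InnGroup Q op\<^esub> h = g \<otimes>\<^bsub>RBij Q\<^esub> h"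
  by (simp add: InnGroup_def)

lemma InnGroup_one[simp]: "\<one>\<^bsub>InnGroup Q op\<^esub> = (\<lambda>x\<in>Q. x)"
  by (simp add: InnGroup_def RBij_def)

lemma InnD_eq: "InnD Q op = derived (RBij Q) (Inn Q op)"
  unfolding InnD_def InnGroup_eq
  by (rule group.derived_consistent[OF RBij_group _ Inn_sub]) simp

lemma InnD_eq2: "InnD Q op = generate (RBij Q) (derived_set (RBij Q) (Inn Q op))"
  unfolding InnD_eq derived_def ..

lemma InnD_sub: "subgroup (InnD Q op) (RBij Q)"
  unfolding InnD_eq
  by (rule group.derived_is_subgroup[OF RBij_group]) (use subgroup.subset[OF Inn_sub] in simp)

lemma InnD_Inn: "InnD Q op \<subseteq> Inn Q op"
  unfolding InnD_eq by (rule group.derived_incl[OF RBij_group _ Inn_sub]) simp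

lemma InnD_Bij: "g \<in> InnD Q op \<Longrightarrow> g \<in> Bij Q"
  using subgroup.subset[OF InnD_sub] by auto

lemma InnD_normal: "InnD Q op \<lhd> InnGroup Q op"
  unfolding InnD_eq InnGroup_eq
  by (rule group.derived_subgroup_is_normal[OF RBij_group Inn_sub])

lemma InnDGroup_group: "group (InnDGroup Q op)"
  unfolding InnDGroup_def by (rule subgroup.subgroup_is_group[OF InnD_sub RBij_group])

lemma InnDGroup_inv: "g \<in> InnD Q op \<Longrightarrow> inv\<^bsub>InnDGroup Q op\<^esub> g = inv\<^bsub>RBij Q\<^esub> g"
  unfolding InnDGroup_def by (rule group.m_inv_consistent[OF RBij_group InnD_sub])

lemma InnDGroup_mult[simp]: "g \<otimes>\<^bsub>InnDGroup Q op\<^esub> h = g \<otimes>\<^bsub>RBij Q\<^esub> h"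
  by (simp add: InnDGroup_def)

lemma InnDGroup_carrier[simp]: "carrier (InnDGroup Q op) = InnD Q op"
  by (simp add: InnDGroup_def)

lemma hom_inv:
  assumes g: "g \<in> Bij Q" and h: "\<And>x y. x \<in> Q \<Longrightarrow> y \<in> Q \<Longrightarrow> g (op x y) = op (g x) (g y)"
    and x: "x \<in> Q" and y: "y \<in> Q"
  shows "(inv\<^bsub>RBij Q\<^esub> g) (op x y) = op ((inv\<^bsub>RBij Q\<^esub> g) x) ((inv\<^bsub>RBij Q\<^esub> g) y)"
proof -
  let ?i = "inv\<^bsub>RBij Q\<^esub> g"
  have ix: "?i x \<in> Q" "?i y \<in> Q" using Bij_app[OF RBij_inv_Bij[OF g]] x y by auto
  have e1: "g (?i x) = x" by (rule RBij_inv_app1[OF g x])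
  have e2: "g (?i y) = y" by (rule RBij_inv_app1[OF g y])
  have e3: "g (op (?i x) (?i y)) = op x y" using h[OF ix] unfolding e1 e2 .
  have e4: "op (?i x) (?i y) \<in> Q" using op_closed ix by auto
  have "?i (op x y) = ?i (g (op (?i x) (?i y)))" unfolding e3 ..
  also have "\<dots> = op (?i x) (?i y)" by (rule RBij_inv_app2[OF g e4])
  finally show ?thesis .
qed

lemma Inn_hom: "g \<in> Inn Q op \<Longrightarrow> x \<in> Q \<Longrightarrow> y \<in> Q \<Longrightarrow> g (op x y) = op (g x) (g y)"
  unfolding Inn_def
proof (induction g arbitrary: x y rule: generate.induct)
  case one
  then show ?case using op_closed by simp
next
  case (incl h)
  then obtain a where a: "a \<in> Q" "h = Rt Q op a" by auto
  have "op x y \<in> Q" using incl.prems op_closed by auto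
  then show ?case using a incl.prems sd[of x y a] by (simp add: Rt_app)
next
  case (inv h)
  then obtain a where a: "a \<in> Q" "h = Rt Q op a" by auto
  have "Rt Q op a (op u v) = op (Rt Q op a u) (Rt Q op a v)" if "u \<in> Q" "v \<in> Q" for u v
  proof -
    have "op u v \<in> Q" using that op_closed by auto
    thus ?thesis using that sd[of u v a] a by (simp add: Rt_app)
  qed
  thus ?case using hom_inv[OF Rt_Bij[OF a(1)] _ inv.prems] a(2) by blast
next
  case (eng h1 h2)
  have b: "h1 \<in> Bij Q" "h2 \<in> Bij Q" using eng.hyps Inn_Bij unfolding Inn_def by auto
  have 1: "h1 (op x y) = op (h1 x) (h1 y)" using eng.IH(1) eng.prems by blast
  have hx: "h1 x \<in> Q" "h1 y \<in> Q" using Bij_app[OF b(1)] eng.prems by auto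
  have 2: "h2 (op (h1 x) (h1 y)) = op (h2 (h1 x)) (h2 (h1 y))" using eng.IH(2) hx by blast
  have 3: "op x y \<in> Q" using op_closed eng.prems by auto
  show ?case
    unfolding RBij_mult_app[OF b 3] RBij_mult_app[OF b eng.prems(1)] RBij_mult_app[OF b eng.prems(2)] 1 2 ..
qed


lemma RBij_mult_Bij: "g \<in> Bij Q \<Longrightarrow> h \<in> Bij Q \<Longrightarrow> g \<otimes>\<^bsub>RBij Q\<^esub> h \<in> Bij Q"
  using monoid.m_closed[OF group.is_monoid[OF RBij_group], of g Q h] by simp

lemma Inn_inv: "g \<in> Inn Q op \<Longrightarrow> inv\<^bsub>RBij Q\<^esub> g \<in> Inn Q op"
  using subgroup.m_inv_closed[OF Inn_sub] by blast

lemma InnD_inv: "g \<in> InnD Q op \<Longrightarrow> inv\<^bsub>RBij Q\<^esub> g \<in> InnD Q op"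
  using subgroup.m_inv_closed[OF InnD_sub] by blast

lemma InnD_mult: "g \<in> InnD Q op \<Longrightarrow> h \<in> InnD Q op \<Longrightarrow> g \<otimes>\<^bsub>RBij Q\<^esub> h \<in> InnD Q op"
  using subgroup.m_closed[OF InnD_sub] by blast

lemma InnD_one: "(\<lambda>x\<in>Q. x) \<in> InnD Q op"
  using subgroup.one_closed[OF InnD_sub] by simp

lemma comm_InnD: "h1 \<in> Inn Q op \<Longrightarrow> h2 \<in> Inn Q op \<Longrightarrow>
   h1 \<otimes>\<^bsub>RBij Q\<^esub> h2 \<otimes>\<^bsub>RBij Q\<^esub> inv\<^bsub>RBij Q\<^esub> h1 \<otimes>\<^bsub>RBij Q\<^esub> inv\<^bsub>RBij Q\<^esub> h2 \<in> InnD Q op"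
  unfolding InnD_eq2 by (rule generate.incl) blast

lemma Rt_fix: "x \<in> Q \<Longrightarrow> Rt Q op x x = x"
  by (simp add: Rt_app idem)

lemma Rt_inv_fix: "x \<in> Q \<Longrightarrow> (inv\<^bsub>RBij Q\<^esub> (Rt Q op x)) x = x"
  using RBij_inv_app2[OF Rt_Bij, of x x] Rt_fix by simp

lemma inv_inv_RBij: "g \<in> Bij Q \<Longrightarrow> inv\<^bsub>RBij Q\<^esub> (inv\<^bsub>RBij Q\<^esub> g) = g"
  using group.inv_inv[OF RBij_group, of g Q] by simp

end

locale qc = qd +
  assumes conn: "\<forall>x\<in>Q. \<forall>y\<in>Q. \<exists>g\<in>Inn Q op. g x = y"
begin

lemma gen_reach:
  assumes a: "a \<in> Q" and x: "x \<in> Q"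
  shows "\<exists>n\<in>InnD Q op. n x = Rt Q op a x"
proof -
  obtain h where h: "h \<in> Inn Q op" "h x = a" using conn x a by blast
  let ?i = "\<lambda>g. inv\<^bsub>RBij Q\<^esub> g"
  let ?m = "\<lambda>g k. g \<otimes>\<^bsub>RBij Q\<^esub> k"
  define n where "n = ?m (?m (?m (?i (Rt Q op x)) (?i h)) (?i (?i (Rt Q op x)))) (?i (?i h))"
  have hB: "h \<in> Bij Q" using Inn_Bij h by auto
  have RB: "Rt Q op x \<in> Bij Q" using Rt_Bij x by auto
  have "n \<in> InnD Q op" unfolding n_def
    by (rule comm_InnD[OF Inn_inv[OF Rt_Inn[OF x]] Inn_inv[OF h(1)]])
  moreover have "n x = Rt Q op a x"
  proof -
    have B: "?i h \<in> Bij Q" "?i (Rt Q op x) \<in> Bij Q" using RBij_inv_Bij hB RB by auto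
    have ix: "?i h x \<in> Q" using Bij_app[OF B(1) x] .
    have "n x = h (Rt Q op x (?i h x))"
      unfolding n_def inv_inv_RBij[OF hB] inv_inv_RBij[OF RB]
      by (simp add: RBij_mult_app RBij_mult_Bij B hB RB x Bij_app Rt_inv_fix)
    also have "\<dots> = h (op (?i h x) x)" using ix by (simp add: Rt_app)
    also have "\<dots> = op (h (?i h x)) (h x)" using Inn_hom[OF h(1) ix x] .
    also have "\<dots> = op x a" using RBij_inv_app1[OF hB x] h(2) by simp
    finally show ?thesis using x by (simp add: Rt_app)
  qed
  ultimately show ?thesis by blast
qed

lemma Inn_reach: "g \<in> Inn Q op \<Longrightarrow> x \<in> Q \<Longrightarrow> \<exists>n\<in>InnD Q op. n x = g x"
  unfolding Inn_def
proof (induction g arbitrary: x rule: generate.induct)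
  case one
  show ?case by (rule bexI[OF _ InnD_one]) simp
next
  case (incl h)
  then obtain a where a: "a \<in> Q" "h = Rt Q op a" by auto
  then show ?case using gen_reach incl.prems by blast
next
  case (inv h)
  then obtain a where a: "a \<in> Q" "h = Rt Q op a" by auto
  let ?y = "(inv\<^bsub>RBij Q\<^esub> (Rt Q op a)) x"
  have RB: "Rt Q op a \<in> Bij Q" using Rt_Bij a by auto
  have y: "?y \<in> Q" using Bij_app[OF RBij_inv_Bij[OF RB] inv.prems] .
  obtain n where n: "n \<in> InnD Q op" "n ?y = Rt Q op a ?y" using gen_reach[OF a(1) y] by blast
  have ny: "n ?y = x" using n(2) RBij_inv_app1[OF RB inv.prems] by simp
  have "(inv\<^bsub>RBij Q\<^esub> n) x = ?y" using RBij_inv_app2[OF InnD_Bij[OF n(1)] y] ny by simp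
  thus ?case using InnD_inv[OF n(1)] a(2) by blast
next
  case (eng h1 h2)
  have b: "h1 \<in> Bij Q" "h2 \<in> Bij Q" using eng.hyps Inn_Bij unfolding Inn_def by auto
  obtain n1 where n1: "n1 \<in> InnD Q op" "n1 x = h1 x" using eng.IH(1) eng.prems by blast
  have hx: "h1 x \<in> Q" using Bij_app[OF b(1) eng.prems] .
  obtain n2 where n2: "n2 \<in> InnD Q op" "n2 (h1 x) = h2 (h1 x)" using eng.IH(2) hx by blast
  have "(n1 \<otimes>\<^bsub>RBij Q\<^esub> n2) x = (h1 \<otimes>\<^bsub>RBij Q\<^esub> h2) x"
    using RBij_mult_app[OF InnD_Bij[OF n1(1)] InnD_Bij[OF n2(1)] eng.prems]
      RBij_mult_app[OF b eng.prems] n1(2) n2(2) by simp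
  thus ?case using InnD_mult[OF n1(1) n2(1)] by blast
qed

lemma InnD_trans: "x \<in> Q \<Longrightarrow> y \<in> Q \<Longrightarrow> \<exists>n\<in>InnD Q op. n x = y"
  using conn Inn_reach by metis


end

lemma fin_order:
  assumes S: "finite S" and f: "bij_betw f S S"
  shows "\<exists>m>0. \<forall>z\<in>S. (f^^m) z = z"
proof -
  define p where "p z = (if z \<in> S then f z else z)" for z
  have "bij_betw p S S" using f by (rule bij_betw_cong[THEN iffD1, rotated]) (simp add: p_def)
  then have "p permutes S" by (rule bij_imp_permutes) (simp add: p_def)
  hence "permutation p" using S permutation_permutes by blast
  then obtain m where m: "p^^m = id" "m>0" by (rule permutation_is_nilpotent)
  have k: "\<forall>z\<in>S. (p^^k) z = (f^^k) z \<and> (f^^k) z \<in> S" for k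
    by (induction k) (auto simp: p_def bij_betw_apply[OF f])
  show ?thesis using m k by (metis id_apply)
qed

locale galt = qd +
  fixes G :: "('b, 'c) monoid_scheme" and f :: "'b \<Rightarrow> 'b" and phi :: "'a \<Rightarrow> 'b"
  assumes grp: "group G" and aut: "f \<in> auto G" and phib: "bij_betw phi Q (carrier G)"
    and phih: "\<forall>x\<in>Q. \<forall>y\<in>Q. phi (op x y) = galex G f (phi x) (phi y)"
    and finQ: "finite Q"
begin

interpretation G: group G by (rule grp)

lemma f_hom: "f \<in> hom G G" using aut by (simp add: auto_def)
lemma f_bij: "bij_betw f (carrier G) (carrier G)" using aut by (simp add: auto_def Bij_def)

lemma fk_closed: "z \<in> carrier G \<Longrightarrow> (f^^k) z \<in> carrier G"
  by (induction k) (auto simp: bij_betw_apply[OF f_bij])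

lemma fk_mult: "x \<in> carrier G \<Longrightarrow> y \<in> carrier G \<Longrightarrow> (f^^k) (x \<otimes>\<^bsub>G\<^esub> y) = (f^^k) x \<otimes>\<^bsub>G\<^esub> (f^^k) y"
  by (induction k) (auto simp: hom_mult[OF f_hom] fk_closed)

lemma fk_add: "(f^^(a+b)) z = (f^^a) ((f^^b) z)"
  by (simp add: funpow_add)

lemma phi_in: "x \<in> Q \<Longrightarrow> phi x \<in> carrier G"
  using bij_betw_apply[OF phib] .

lemma finG: "finite (carrier G)"
  using bij_betw_finite[OF phib] finQ by simp

definition m where "m = (SOME m. m > 0 \<and> (\<forall>z\<in>carrier G. (f^^m) z = z))"

lemma m_prop: "m > 0" "\<And>z. z \<in> carrier G \<Longrightarrow> (f^^m) z = z"
proof -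
  have "\<exists>m. m > 0 \<and> (\<forall>z\<in>carrier G. (f^^m) z = z)" using fin_order[OF finG f_bij] by blast
  hence "m > 0 \<and> (\<forall>z\<in>carrier G. (f^^m) z = z)" unfolding m_def by (rule someI_ex)
  thus "m > 0" "\<And>z. z \<in> carrier G \<Longrightarrow> (f^^m) z = z" by auto
qed

lemma fper: "z \<in> carrier G \<Longrightarrow> (f^^(m*j)) z = z"
proof (induction j)
  case 0 then show ?case by simp
next
  case (Suc j)
  have mm: "m * Suc j = m + m * j" by simp
  have "(f^^(m*Suc j)) z = (f^^m) ((f^^(m*j)) z)" by (simp only: mm fk_add)
  then show ?case using Suc m_prop(2) by simp
qed

definition P :: "nat \<Rightarrow> ('a \<Rightarrow> 'a) \<Rightarrow> bool" where
  "P k g \<longleftrightarrow> (\<exists>c\<in>carrier G. \<forall>x\<in>Q. phi (g x) = (f^^k) (phi x) \<otimes>\<^bsub>G\<^esub> c)"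

lemma P_mult:
  assumes g: "g \<in> Bij Q" and h: "h \<in> Bij Q" and Pg: "P k1 g" and Ph: "P k2 h"
  shows "P (k2 + k1) (g \<otimes>\<^bsub>RBij Q\<^esub> h)"
proof -
  obtain c1 where c1: "c1 \<in> carrier G" "\<forall>x\<in>Q. phi (g x) = (f^^k1) (phi x) \<otimes>\<^bsub>G\<^esub> c1"
    using Pg unfolding P_def by blast
  obtain c2 where c2: "c2 \<in> carrier G" "\<forall>x\<in>Q. phi (h x) = (f^^k2) (phi x) \<otimes>\<^bsub>G\<^esub> c2"
    using Ph unfolding P_def by blast
  have "phi ((g \<otimes>\<^bsub>RBij Q\<^esub> h) x) = (f^^(k2+k1)) (phi x) \<otimes>\<^bsub>G\<^esub> ((f^^k2) c1 \<otimes>\<^bsub>G\<^esub> c2)"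
    if x: "x \<in> Q" for x
  proof -
    have gx: "g x \<in> Q" using Bij_app[OF g x] .
    have px: "phi x \<in> carrier G" using phi_in[OF x] .
    have "phi ((g \<otimes>\<^bsub>RBij Q\<^esub> h) x) = phi (h (g x))" using RBij_mult_app[OF g h x] by simp
    also have "\<dots> = (f^^k2) (phi (g x)) \<otimes>\<^bsub>G\<^esub> c2" using c2 gx by blast
    also have "\<dots> = (f^^k2) ((f^^k1) (phi x) \<otimes>\<^bsub>G\<^esub> c1) \<otimes>\<^bsub>G\<^esub> c2" using c1 x by simp
    also have "\<dots> = ((f^^k2) ((f^^k1) (phi x)) \<otimes>\<^bsub>G\<^esub> (f^^k2) c1) \<otimes>\<^bsub>G\<^esub> c2"
      using fk_mult[OF fk_closed[OF px] c1(1)] by simp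
    also have "\<dots> = (f^^(k2+k1)) (phi x) \<otimes>\<^bsub>G\<^esub> ((f^^k2) c1 \<otimes>\<^bsub>G\<^esub> c2)"
      by (simp add: fk_add G.m_assoc fk_closed px c1 c2)
    finally show ?thesis .
  qed
  moreover have "(f^^k2) c1 \<otimes>\<^bsub>G\<^esub> c2 \<in> carrier G" using fk_closed c1 c2 by simp
  ultimately show ?thesis unfolding P_def by blast
qed

lemma P_inv:
  assumes g: "g \<in> Bij Q" and Pg: "P k g"
  shows "P ((m - 1) * k) (inv\<^bsub>RBij Q\<^esub> g)"
proof -
  obtain c where c: "c \<in> carrier G" "\<forall>x\<in>Q. phi (g x) = (f^^k) (phi x) \<otimes>\<^bsub>G\<^esub> c"
    using Pg unfolding P_def by blast
  let ?K = "(m - 1) * k"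
  have KK: "?K + k = m * k" using m_prop(1) by (cases m) auto
  have "phi ((inv\<^bsub>RBij Q\<^esub> g) x) = (f^^?K) (phi x) \<otimes>\<^bsub>G\<^esub> (f^^?K) (inv\<^bsub>G\<^esub> c)"
    if x: "x \<in> Q" for x
  proof -
    let ?y = "(inv\<^bsub>RBij Q\<^esub> g) x"
    have y: "?y \<in> Q" using Bij_app[OF RBij_inv_Bij[OF g] x] .
    have gy: "g ?y = x" using RBij_inv_app1[OF g x] .
    have py: "phi ?y \<in> carrier G" using phi_in[OF y] .
    have px: "phi x \<in> carrier G" using phi_in[OF x] .
    have e: "phi x = (f^^k) (phi ?y) \<otimes>\<^bsub>G\<^esub> c" using c(2) y gy by metis
    have e2: "(f^^k) (phi ?y) = phi x \<otimes>\<^bsub>G\<^esub> inv\<^bsub>G\<^esub> c"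
      using G.inv_solve_right[OF fk_closed[OF py] px c(1)] e by simp
    have "phi ?y = (f^^(?K + k)) (phi ?y)" unfolding KK using fper[OF py] by simp
    also have "\<dots> = (f^^?K) (phi x \<otimes>\<^bsub>G\<^esub> inv\<^bsub>G\<^esub> c)" by (simp add: fk_add e2)
    also have "\<dots> = (f^^?K) (phi x) \<otimes>\<^bsub>G\<^esub> (f^^?K) (inv\<^bsub>G\<^esub> c)" using fk_mult px c(1) by simp
    finally show ?thesis .
  qed
  moreover have "(f^^?K) (inv\<^bsub>G\<^esub> c) \<in> carrier G" using fk_closed c by simp
  ultimately show ?thesis unfolding P_def by blast
qed

lemma P_per: "P (m * j) g \<Longrightarrow> P 0 g"
  unfolding P_def using fper phi_in by simp

lemma P_one: "P 0 (\<lambda>x\<in>Q. x)"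
  unfolding P_def using phi_in by (intro bexI[of _ "\<one>\<^bsub>G\<^esub>"]) auto

lemma P_Rt: "a \<in> Q \<Longrightarrow> P 1 (Rt Q op a)"
proof -
  assume a: "a \<in> Q"
  have pa: "phi a \<in> carrier G" using phi_in[OF a] .
  have "phi (Rt Q op a x) = f (phi x) \<otimes>\<^bsub>G\<^esub> (f (inv\<^bsub>G\<^esub> phi a) \<otimes>\<^bsub>G\<^esub> phi a)" if x: "x \<in> Q" for x
  proof -
    have px: "phi x \<in> carrier G" using phi_in[OF x] .
    have "phi (Rt Q op a x) = galex G f (phi x) (phi a)" using phih x a by (simp add: Rt_app)
    also have "\<dots> = (f (phi x) \<otimes>\<^bsub>G\<^esub> f (inv\<^bsub>G\<^esub> phi a)) \<otimes>\<^bsub>G\<^esub> phi a"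
      unfolding galex_def using hom_mult[OF f_hom px G.inv_closed[OF pa]] by simp
    also have "\<dots> = f (phi x) \<otimes>\<^bsub>G\<^esub> (f (inv\<^bsub>G\<^esub> phi a) \<otimes>\<^bsub>G\<^esub> phi a)"
      using G.m_assoc bij_betw_apply[OF f_bij] px pa by simp
    finally show ?thesis .
  qed
  moreover have "f (inv\<^bsub>G\<^esub> phi a) \<otimes>\<^bsub>G\<^esub> phi a \<in> carrier G" using bij_betw_apply[OF f_bij] pa by simp
  ultimately show ?thesis unfolding P_def by auto
qed

lemma P_Inn: "g \<in> Inn Q op \<Longrightarrow> \<exists>k. P k g"
  unfolding Inn_def
proof (induction g rule: generate.induct)
  case one show ?case by (subst RBij_one) (rule exI, rule P_one)
next
  case (incl h) then show ?case using P_Rt by auto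
next
  case (inv h)
  then obtain a where a: "a \<in> Q" "h = Rt Q op a" by auto
  show ?case using P_inv[OF Rt_Bij[OF a(1)] P_Rt[OF a(1)]] a(2) by auto
next
  case (eng h1 h2)
  have b: "h1 \<in> Bij Q" "h2 \<in> Bij Q" using eng.hyps Inn_Bij unfolding Inn_def by auto
  then show ?case using P_mult eng.IH by blast
qed

lemma P_comm:
  assumes h: "h1 \<in> Inn Q op" "h2 \<in> Inn Q op"
    "h = h1 \<otimes>\<^bsub>RBij Q\<^esub> h2 \<otimes>\<^bsub>RBij Q\<^esub> inv\<^bsub>RBij Q\<^esub> h1 \<otimes>\<^bsub>RBij Q\<^esub> inv\<^bsub>RBij Q\<^esub> h2"
  shows "P 0 h"
proof -
  obtain k1 k2 where k: "P k1 h1" "P k2 h2" using P_Inn h by blast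
  have b: "h1 \<in> Bij Q" "h2 \<in> Bij Q" using h Inn_Bij by auto
  have ib: "inv\<^bsub>RBij Q\<^esub> h1 \<in> Bij Q" "inv\<^bsub>RBij Q\<^esub> h2 \<in> Bij Q" using RBij_inv_Bij b by auto
  have 1: "P (k2 + k1) (h1 \<otimes>\<^bsub>RBij Q\<^esub> h2)" by (rule P_mult[OF b k])
  have 2: "P ((m - 1) * k1 + (k2 + k1)) (h1 \<otimes>\<^bsub>RBij Q\<^esub> h2 \<otimes>\<^bsub>RBij Q\<^esub> inv\<^bsub>RBij Q\<^esub> h1)"
    by (rule P_mult[OF RBij_mult_Bij[OF b] ib(1) 1 P_inv[OF b(1) k(1)]])
  have 3: "P ((m - 1) * k2 + ((m - 1) * k1 + (k2 + k1))) h"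
    unfolding h(3)
    by (rule P_mult[OF RBij_mult_Bij[OF RBij_mult_Bij[OF b] ib(1)] ib(2) 2 P_inv[OF b(2) k(2)]])
  have "(m - 1) * k2 + ((m - 1) * k1 + (k2 + k1)) = m * (k1 + k2)"
    using m_prop(1) by (cases m) (auto simp: algebra_simps)
  then show ?thesis using 3 P_per by metis
qed

lemma P_InnD: "g \<in> InnD Q op \<Longrightarrow> P 0 g"
  unfolding InnD_eq2
proof (induction g rule: generate.induct)
  case one show ?case by (subst RBij_one) (rule P_one)
next
  case (incl h)
  then obtain h1 h2 where h: "h1 \<in> Inn Q op" "h2 \<in> Inn Q op"
    "h = h1 \<otimes>\<^bsub>RBij Q\<^esub> h2 \<otimes>\<^bsub>RBij Q\<^esub> inv\<^bsub>RBij Q\<^esub> h1 \<otimes>\<^bsub>RBij Q\<^esub> inv\<^bsub>RBij Q\<^esub> h2" by blast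
  show ?case using P_comm[OF h] .
next
  case (inv h)
  then obtain h1 h2 where h: "h1 \<in> Inn Q op" "h2 \<in> Inn Q op"
    "h = h1 \<otimes>\<^bsub>RBij Q\<^esub> h2 \<otimes>\<^bsub>RBij Q\<^esub> inv\<^bsub>RBij Q\<^esub> h1 \<otimes>\<^bsub>RBij Q\<^esub> inv\<^bsub>RBij Q\<^esub> h2" by blast
  have hi: "h \<in> InnD Q op" using comm_InnD[OF h(1,2)] h(3) by simp
  have "P 0 h" using P_comm[OF h] .
  then show ?case using P_inv[OF InnD_Bij[OF hi]] by fastforce
next
  case (eng h1 h2)
  have b: "h1 \<in> Bij Q" "h2 \<in> Bij Q"
    using eng.hyps InnD_Bij unfolding InnD_eq2 by auto
  then show ?case using P_mult[OF b eng.IH] by simp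
qed


lemma galt_stab:
  assumes e: "e \<in> Q"
  shows "Stab (InnD Q op) e = {\<lambda>x\<in>Q. x}"
proof
  show "{\<lambda>x\<in>Q. x} \<subseteq> Stab (InnD Q op) e" using InnD_one e by (simp add: Stab_def)
  show "Stab (InnD Q op) e \<subseteq> {\<lambda>x\<in>Q. x}"
  proof
    fix n assume "n \<in> Stab (InnD Q op) e"
    hence n: "n \<in> InnD Q op" "n e = e" by (auto simp: Stab_def)
    obtain c where c: "c \<in> carrier G" "\<forall>x\<in>Q. phi (n x) = phi x \<otimes>\<^bsub>G\<^esub> c"
      using P_InnD[OF n(1)] unfolding P_def by auto
    have "phi e = phi e \<otimes>\<^bsub>G\<^esub> c" using c(2) e n(2) by metis
    hence c1: "c = \<one>\<^bsub>G\<^esub>" using G.l_cancel_one'[OF phi_in[OF e] c(1)] by simp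
    have nB: "n \<in> Bij Q" using InnD_Bij[OF n(1)] .
    have "n = (\<lambda>x\<in>Q. x)"
    proof (rule Bij_eqI[OF nB id_Bij])
      fix x assume x: "x \<in> Q"
      have "phi (n x) = phi x" using c(2) x c1 phi_in[OF x] by simp
      hence "n x = x" using bij_betw_imp_inj_on[OF phib] Bij_app[OF nB x] x by (auto dest: inj_onD)
      thus "n x = (\<lambda>x\<in>Q. x) x" using x by simp
    qed
    thus "n \<in> {\<lambda>x\<in>Q. x}" by simp
  qed
qed


end

context qc
begin

lemma psi_bij:
  assumes stab: "\<forall>e\<in>Q. Stab (InnD Q op) e = {\<lambda>x\<in>Q. x}" and e: "e \<in> Q"
  shows "bij_betw (\<lambda>n. n e) (InnD Q op) Q"
  unfolding bij_betw_def
proof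
  show "inj_on (\<lambda>n. n e) (InnD Q op)"
  proof (rule inj_onI)
    fix n1 n2 assume n1: "n1 \<in> InnD Q op" and n2: "n2 \<in> InnD Q op" and eq: "n1 e = n2 e"
    have b: "n1 \<in> Bij Q" "n2 \<in> Bij Q" using InnD_Bij n1 n2 by auto
    let ?m = "n1 \<otimes>\<^bsub>RBij Q\<^esub> inv\<^bsub>RBij Q\<^esub> n2"
    have mI: "?m \<in> InnD Q op" using InnD_mult[OF n1 InnD_inv[OF n2]] .
    have "?m e = e" using RBij_mult_app[OF b(1) RBij_inv_Bij[OF b(2)] e] RBij_inv_app2[OF b(2) e] eq by simp
    hence "?m \<in> Stab (InnD Q op) e" using mI by (simp add: Stab_def)
    hence m1: "?m = (\<lambda>x\<in>Q. x)" using stab e by auto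
    show "n1 = n2"
    proof (rule Bij_eqI[OF b])
      fix x assume x: "x \<in> Q"
      have "?m x = x" using m1 x by simp
      hence "(inv\<^bsub>RBij Q\<^esub> n2) (n1 x) = x" using RBij_mult_app[OF b(1) RBij_inv_Bij[OF b(2)] x] by simp
      hence "n2 ((inv\<^bsub>RBij Q\<^esub> n2) (n1 x)) = n2 x" by simp
      thus "n1 x = n2 x" using RBij_inv_app1[OF b(2) Bij_app[OF b(1) x]] by simp
    qed
  qed
  show "(\<lambda>n. n e) ` InnD Q op = Q"
  proof
    show "(\<lambda>n. n e) ` InnD Q op \<subseteq> Q" using e by (auto intro: Bij_app[OF InnD_Bij])
    show "Q \<subseteq> (\<lambda>n. n e) ` InnD Q op"
    proof
      fix y assume y: "y \<in> Q"
      then obtain n where "n \<in> InnD Q op" "n e = y" using InnD_trans[OF e y] by blast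
      thus "y \<in> (\<lambda>n. n e) ` InnD Q op" by blast
    qed
  qed
qed

lemma part2a:
  assumes stab: "\<forall>e\<in>Q. Stab (InnD Q op) e = {\<lambda>x\<in>Q. x}" and ne: "Q \<noteq> {}"
  shows "card Q = card (InnD Q op)"
proof -
  obtain e where e: "e \<in> Q" using ne by blast
  show ?thesis using bij_betw_same_card[OF psi_bij[OF stab e]] by simp
qed

lemma part2b:
  assumes fin: "finite Q" and ne: "Q \<noteq> {}" and c: "card Q = card (InnD Q op)"
  shows "\<forall>e\<in>Q. Stab (InnD Q op) e = {\<lambda>x\<in>Q. x}"
proof
  fix e assume e: "e \<in> Q"
  have finD: "finite (InnD Q op)" using c fin ne by (metis card_eq_0_iff)
  have im: "(\<lambda>n. n e) ` InnD Q op = Q"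
  proof
    show "(\<lambda>n. n e) ` InnD Q op \<subseteq> Q" using e by (auto intro: Bij_app[OF InnD_Bij])
    show "Q \<subseteq> (\<lambda>n. n e) ` InnD Q op"
    proof
      fix y assume y: "y \<in> Q"
      then obtain n where "n \<in> InnD Q op" "n e = y" using InnD_trans[OF e y] by blast
      thus "y \<in> (\<lambda>n. n e) ` InnD Q op" by blast
    qed
  qed
  have inj: "inj_on (\<lambda>n. n e) (InnD Q op)"
    using inj_on_iff_eq_card[OF finD, of "\<lambda>n. n e"] im c by simp
  show "Stab (InnD Q op) e = {\<lambda>x\<in>Q. x}"
  proof
    show "{\<lambda>x\<in>Q. x} \<subseteq> Stab (InnD Q op) e" using InnD_one e by (simp add: Stab_def)
    show "Stab (InnD Q op) e \<subseteq> {\<lambda>x\<in>Q. x}"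
    proof
      fix n assume "n \<in> Stab (InnD Q op) e"
      hence n: "n \<in> InnD Q op" "n e = e" by (auto simp: Stab_def)
      have "n e = (\<lambda>x\<in>Q. x) e" using n(2) e by simp
      hence "n = (\<lambda>x\<in>Q. x)" using inj_onD[OF inj _ n(1) InnD_one] by simp
      thus "n \<in> {\<lambda>x\<in>Q. x}" by simp
    qed
  qed
qed

lemma conjR_eq:
  assumes e: "e \<in> Q" and g: "g \<in> InnD Q op"
  shows "conjR Q op e g = inv\<^bsub>RBij Q\<^esub> (Rt Q op e) \<otimes>\<^bsub>RBij Q\<^esub> g \<otimes>\<^bsub>RBij Q\<^esub> Rt Q op e"
  using g by (simp add: conjR_def InnGroup_inv[OF Rt_Inn[OF e]])

lemma conjR_in:
  assumes e: "e \<in> Q" and g: "g \<in> InnD Q op"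
  shows "conjR Q op e g \<in> InnD Q op"
proof -
  have "inv\<^bsub>InnGroup Q op\<^esub> (Rt Q op e) \<otimes>\<^bsub>InnGroup Q op\<^esub> g \<otimes>\<^bsub>InnGroup Q op\<^esub> Rt Q op e \<in> InnD Q op"
    by (rule normal.inv_op_closed1[OF InnD_normal]) (use Rt_Inn[OF e] g in \<open>simp_all add: InnGroup_def\<close>)
  thus ?thesis using g by (simp add: conjR_def)
qed

lemma conjR_app:
  assumes e: "e \<in> Q" and g: "g \<in> InnD Q op" and x: "x \<in> Q"
  shows "conjR Q op e g x = Rt Q op e (g ((inv\<^bsub>RBij Q\<^esub> (Rt Q op e)) x))"
proof -
  have R: "Rt Q op e \<in> Bij Q" using Rt_Bij[OF e] .
  have gB: "g \<in> Bij Q" using InnD_Bij[OF g] .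
  show ?thesis unfolding conjR_eq[OF e g]
    by (simp add: RBij_mult_app RBij_mult_Bij RBij_inv_Bij R gB x Bij_app)
qed

lemma conjR_auto:
  assumes e: "e \<in> Q"
  shows "conjR Q op e \<in> auto (InnDGroup Q op)"
proof -
  let ?R = "Rt Q op e"
  let ?iR = "inv\<^bsub>RBij Q\<^esub> (Rt Q op e)"
  have R: "?R \<in> Bij Q" using Rt_Bij[OF e] .
  have iR: "?iR \<in> Bij Q" using RBij_inv_Bij[OF R] .
  have hom: "conjR Q op e \<in> hom (InnDGroup Q op) (InnDGroup Q op)"
  proof (rule homI)
    show "conjR Q op e x \<in> carrier (InnDGroup Q op)" if "x \<in> carrier (InnDGroup Q op)" for x
      using conjR_in[OF e] that by simp
    show "conjR Q op e (x \<otimes>\<^bsub>InnDGroup Q op\<^esub> y) =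
          conjR Q op e x \<otimes>\<^bsub>InnDGroup Q op\<^esub> conjR Q op e y"
      if x: "x \<in> carrier (InnDGroup Q op)" and y: "y \<in> carrier (InnDGroup Q op)" for x y
    proof -
      have xi: "x \<in> InnD Q op" "y \<in> InnD Q op" using x y by auto
      have xy: "x \<otimes>\<^bsub>RBij Q\<^esub> y \<in> InnD Q op" using InnD_mult xi by auto
      have b: "x \<in> Bij Q" "y \<in> Bij Q" using InnD_Bij xi by auto
      have cb: "conjR Q op e x \<in> Bij Q" "conjR Q op e y \<in> Bij Q" using InnD_Bij conjR_in[OF e] xi by auto
      show ?thesis
      proof (simp, rule Bij_eqI[OF InnD_Bij[OF conjR_in[OF e xy]] RBij_mult_Bij[OF cb]])
        fix z assume z: "z \<in> Q"
        have iz: "?iR z \<in> Q" using Bij_app[OF iR z] .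
        have xz: "x (?iR z) \<in> Q" using Bij_app[OF b(1) iz] .
        have "conjR Q op e (x \<otimes>\<^bsub>RBij Q\<^esub> y) z = ?R (y (x (?iR z)))"
          using conjR_app[OF e xy z] RBij_mult_app[OF b iz] by simp
        also have "\<dots> = ?R (y (?iR (?R (x (?iR z)))))" using RBij_inv_app2[OF R xz] by simp
        also have "\<dots> = (conjR Q op e x \<otimes>\<^bsub>RBij Q\<^esub> conjR Q op e y) z"
          using RBij_mult_app[OF cb z] conjR_app[OF e xi(1) z]
            conjR_app[OF e xi(2) Bij_app[OF cb(1) z]] by simp
        finally show "conjR Q op e (x \<otimes>\<^bsub>RBij Q\<^esub> y) z = (conjR Q op e x \<otimes>\<^bsub>RBij Q\<^esub> conjR Q op e y) z" .
      qed
    qed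
  qed
  have ext: "conjR Q op e \<in> extensional (InnD Q op)" by (simp add: conjR_def)
  have inj: "inj_on (conjR Q op e) (InnD Q op)"
  proof (rule inj_onI)
    fix g h assume g: "g \<in> InnD Q op" and h: "h \<in> InnD Q op" and eq: "conjR Q op e g = conjR Q op e h"
    have b: "g \<in> Bij Q" "h \<in> Bij Q" using InnD_Bij g h by auto
    show "g = h"
    proof (rule Bij_eqI[OF b])
      fix y assume y: "y \<in> Q"
      have Ry: "?R y \<in> Q" using Bij_app[OF R y] .
      have "conjR Q op e g (?R y) = conjR Q op e h (?R y)" using eq by simp
      hence "?R (g y) = ?R (h y)" using conjR_app[OF e g Ry] conjR_app[OF e h Ry] RBij_inv_app2[OF R y] by simp
      hence "?iR (?R (g y)) = ?iR (?R (h y))" by simp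
      thus "g y = h y" using RBij_inv_app2[OF R Bij_app[OF b(1) y]] RBij_inv_app2[OF R Bij_app[OF b(2) y]] by simp
    qed
  qed
  have surj: "conjR Q op e ` InnD Q op = InnD Q op"
  proof
    show "conjR Q op e ` InnD Q op \<subseteq> InnD Q op" using conjR_in[OF e] by auto
    show "InnD Q op \<subseteq> conjR Q op e ` InnD Q op"
    proof
      fix g assume g: "g \<in> InnD Q op"
      have gB: "g \<in> Bij Q" using InnD_Bij[OF g] .
      let ?k = "?R \<otimes>\<^bsub>RBij Q\<^esub> g \<otimes>\<^bsub>RBij Q\<^esub> ?iR"
      have "?R \<otimes>\<^bsub>InnGroup Q op\<^esub> g \<otimes>\<^bsub>InnGroup Q op\<^esub> inv\<^bsub>InnGroup Q op\<^esub> ?R \<in> InnD Q op"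
        by (rule normal.inv_op_closed2[OF InnD_normal]) (use Rt_Inn[OF e] g in \<open>simp_all add: InnGroup_def\<close>)
      hence k: "?k \<in> InnD Q op" using InnGroup_inv[OF Rt_Inn[OF e]] by simp
      have "conjR Q op e ?k = g"
      proof (rule Bij_eqI[OF InnD_Bij[OF conjR_in[OF e k]] gB])
        fix z assume z: "z \<in> Q"
        have iz: "?iR z \<in> Q" using Bij_app[OF iR z] .
        have giz: "g (?R (?iR z)) \<in> Q" using Bij_app[OF gB Bij_app[OF R iz]] .
        have "conjR Q op e ?k z = ?R (?k (?iR z))" using conjR_app[OF e k z] .
        also have "\<dots> = ?R (?iR (g (?R (?iR z))))"
          using RBij_mult_app[OF RBij_mult_Bij[OF R gB] iR iz] RBij_mult_app[OF R gB iz] by simp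
        also have "\<dots> = g z" using RBij_inv_app1[OF R giz] RBij_inv_app1[OF R z] by simp
        finally show "conjR Q op e ?k z = g z" .
      qed
      thus "g \<in> conjR Q op e ` InnD Q op" using k by (metis imageI)
    qed
  qed
  show ?thesis unfolding auto_def using hom ext inj surj by (simp add: Bij_def bij_betw_def)
qed

lemma part3_iso:
  assumes stab: "\<forall>e\<in>Q. Stab (InnD Q op) e = {\<lambda>x\<in>Q. x}" and e: "e \<in> Q"
  shows "quandle_iso Q op (InnD Q op) (galex (InnDGroup Q op) (conjR Q op e))"
proof -
  let ?psi = "\<lambda>n. n e"
  have pb: "bij_betw ?psi (InnD Q op) Q" using psi_bij[OF stab e] .
  let ?phi = "inv_into (InnD Q op) ?psi"
  have phib: "bij_betw ?phi Q (InnD Q op)" using bij_betw_inv_into[OF pb] .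
  have key: "galex (InnDGroup Q op) (conjR Q op e) a b \<in> InnD Q op \<and>
      galex (InnDGroup Q op) (conjR Q op e) a b e = op (a e) (b e)"
    if a: "a \<in> InnD Q op" and b: "b \<in> InnD Q op" for a b
  proof -
    let ?ib = "inv\<^bsub>RBij Q\<^esub> b"
    have aB: "a \<in> Bij Q" and bB: "b \<in> Bij Q" using InnD_Bij a b by auto
    have ib: "?ib \<in> InnD Q op" using InnD_inv[OF b] .
    have ab: "a \<otimes>\<^bsub>RBij Q\<^esub> ?ib \<in> InnD Q op" using InnD_mult[OF a ib] .
    have cI: "conjR Q op e (a \<otimes>\<^bsub>RBij Q\<^esub> ?ib) \<in> InnD Q op" using conjR_in[OF e ab] .
    have gal: "galex (InnDGroup Q op) (conjR Q op e) a b = conjR Q op e (a \<otimes>\<^bsub>RBij Q\<^esub> ?ib) \<otimes>\<^bsub>RBij Q\<^esub> b"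
      by (simp add: galex_def InnDGroup_inv[OF b])
    have ae: "a e \<in> Q" using Bij_app[OF aB e] .
    have iae: "?ib (a e) \<in> Q" using Bij_app[OF RBij_inv_Bij[OF bB] ae] .
    have "(conjR Q op e (a \<otimes>\<^bsub>RBij Q\<^esub> ?ib) \<otimes>\<^bsub>RBij Q\<^esub> b) e
          = b (conjR Q op e (a \<otimes>\<^bsub>RBij Q\<^esub> ?ib) e)"
      using RBij_mult_app[OF InnD_Bij[OF cI] bB e] .
    also have "\<dots> = b (Rt Q op e ((a \<otimes>\<^bsub>RBij Q\<^esub> ?ib) e))"
      using conjR_app[OF e ab e] Rt_inv_fix[OF e] by simp
    also have "\<dots> = b (op (?ib (a e)) e)"
      using RBij_mult_app[OF aB RBij_inv_Bij[OF bB] e] Rt_app[OF iae] by simp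
    also have "\<dots> = op (b (?ib (a e))) (b e)" using Inn_hom[OF subsetD[OF InnD_Inn b] iae e] .
    also have "\<dots> = op (a e) (b e)" using RBij_inv_app1[OF bB ae] by simp
    finally show ?thesis using gal InnD_mult[OF cI b] by simp
  qed
  have "?phi (op x y) = galex (InnDGroup Q op) (conjR Q op e) (?phi x) (?phi y)"
    if x: "x \<in> Q" and y: "y \<in> Q" for x y
  proof -
    have px: "?phi x \<in> InnD Q op" "?phi y \<in> InnD Q op" using bij_betw_apply[OF phib] x y by auto
    have ex: "?phi x e = x" "?phi y e = y"
      using f_inv_into_f[of x ?psi "InnD Q op"] f_inv_into_f[of y ?psi "InnD Q op"] x y
        bij_betw_imp_surj_on[OF pb] by auto
    let ?c = "galex (InnDGroup Q op) (conjR Q op e) (?phi x) (?phi y)"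
    have c: "?c \<in> InnD Q op" "?c e = op x y" using key[OF px] ex by auto
    show ?thesis using inv_into_f_f[OF bij_betw_imp_inj_on[OF pb] c(1)] c(2) by simp
  qed
  thus ?thesis unfolding quandle_iso_def using phib by blast
qed

end
theorem mainTheorem11:
  fixes Q :: "'a set" and op :: "'a \<Rightarrow> 'a \<Rightarrow> 'a"
  assumes "finite Q" and "Q \<noteq> {}" and "connected_quandle Q op"
  shows "(\<forall>(G :: ('b, 'c) monoid_scheme) f. group G \<and> f \<in> auto G \<and>
              quandle_iso Q op (carrier G) (galex G f) \<longrightarrow>
            card Q = card (InnD Q op) \<or> (\<forall>e\<in>Q. Stab (InnD Q op) e = {\<one>\<^bsub>InnGroup Q op\<^esub>}))
       \<and> ((card Q = card (InnD Q op) \<or> (\<forall>e\<in>Q. Stab (InnD Q op) e = {\<one>\<^bsub>InnGroup Q op\<^esub>})) \<longrightarrow>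
            card Q = card (InnD Q op) \<and> (\<forall>e\<in>Q. Stab (InnD Q op) e = {\<one>\<^bsub>InnGroup Q op\<^esub>}))
       \<and> ((card Q = card (InnD Q op) \<or> (\<forall>e\<in>Q. Stab (InnD Q op) e = {\<one>\<^bsub>InnGroup Q op\<^esub>})) \<longrightarrow>
            group (InnDGroup Q op) \<and>
            (\<forall>e\<in>Q. conjR Q op e \<in> auto (InnDGroup Q op) \<and>
               quandle_iso Q op (InnD Q op) (galex (InnDGroup Q op) (conjR Q op e))))"
proof -
  interpret qc Q op
    using assms(3) unfolding connected_quandle_def by (unfold_locales) auto
  have one: "\<one>\<^bsub>InnGroup Q op\<^esub> = (\<lambda>x\<in>Q. x)" by simp
  have p2: "(card Q = card (InnD Q op) \<or> (\<forall>e\<in>Q. Stab (InnD Q op) e = {\<one>\<^bsub>InnGroup Q op\<^esub>})) \<longrightarrow>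
            card Q = card (InnD Q op) \<and> (\<forall>e\<in>Q. Stab (InnD Q op) e = {\<one>\<^bsub>InnGroup Q op\<^esub>})"
    unfolding one using part2a[OF _ assms(2)] part2b[OF assms(1,2)] by blast
  have p1: "\<forall>(G :: ('b, 'c) monoid_scheme) f. group G \<and> f \<in> auto G \<and>
              quandle_iso Q op (carrier G) (galex G f) \<longrightarrow>
            card Q = card (InnD Q op) \<or> (\<forall>e\<in>Q. Stab (InnD Q op) e = {\<one>\<^bsub>InnGroup Q op\<^esub>})"
  proof (intro allI impI)
    fix G :: "('b, 'c) monoid_scheme" and f
    assume H: "group G \<and> f \<in> auto G \<and> quandle_iso Q op (carrier G) (galex G f)"
    then obtain phi where phi: "bij_betw phi Q (carrier G)"
      "\<forall>x\<in>Q. \<forall>y\<in>Q. phi (op x y) = galex G f (phi x) (phi y)"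
      unfolding quandle_iso_def by blast
    have gl: "galt Q op G f phi"
      unfolding galt_def galt_axioms_def using H phi assms(1) qd_axioms by auto
    interpret galt Q op G f phi by (rule gl)
    show "card Q = card (InnD Q op) \<or> (\<forall>e\<in>Q. Stab (InnD Q op) e = {\<one>\<^bsub>InnGroup Q op\<^esub>})"
      unfolding one using galt_stab by blast
  qed
  have p3: "(card Q = card (InnD Q op) \<or> (\<forall>e\<in>Q. Stab (InnD Q op) e = {\<one>\<^bsub>InnGroup Q op\<^esub>})) \<longrightarrow>
            group (InnDGroup Q op) \<and>
            (\<forall>e\<in>Q. conjR Q op e \<in> auto (InnDGroup Q op) \<and>
               quandle_iso Q op (InnD Q op) (galex (InnDGroup Q op) (conjR Q op e)))"
  proof
    assume "card Q = card (InnD Q op) \<or> (\<forall>e\<in>Q. Stab (InnD Q op) e = {\<one>\<^bsub>InnGroup Q op\<^esub>})"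
    hence st: "\<forall>e\<in>Q. Stab (InnD Q op) e = {\<lambda>x\<in>Q. x}" using p2 unfolding one by blast
    show "group (InnDGroup Q op) \<and>
            (\<forall>e\<in>Q. conjR Q op e \<in> auto (InnDGroup Q op) \<and>
               quandle_iso Q op (InnD Q op) (galex (InnDGroup Q op) (conjR Q op e)))"
      using InnDGroup_group conjR_auto part3_iso[OF st] by blast
  qed
  show ?thesis using p1 p2 p3 by blast
qed

end
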